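(* Let $s$ be a positive integer such that $4\mid s$ or $4\mid (s+1)$, let $k=2s+1$, and let $t$ be an integer. Let $E$ (resp. $O$) be the number of binary vectors $(b_1,\dots,b_s)\in\{0,1\}^s$ with $\sum_{j=1}^{s} j\,b_j\equiv t \pmod{k}$ and $\sum_{j=1}^s b_j$ even (resp. odd), i.e. $E=|\mathrm{SVT}_{t,0}(s,2s+1)|$ and $O=|\mathrm{SVT}_{t,1}(s,2s+1)|$. Then $$E-O=\sigma^{(0)}_{k}(t;s+1)=\frac{1}{k}\sum_{j=0}^{k-1}c_{k}\!\left(t-j^{2}-\frac{s(s+1)}{4}\right).$$ Moreover, if $k$ is a perfect square, then $$E-O=\sigma^{(0)}_{k}(t;s+1)=\frac{1}{\sqrt{k}}\,c_{k}\!\left(t-\frac{s(s+1)}{4}\right).$$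
   Context: For a positive integer $m$, $(q)_m=(1-q)(1-q^2)\cdots(1-q^m)$ and $(q)_0=1$. For integers $k\ge 1$ and $1\le s\le k$, $\sigma^{(0)}_k(t;s)$ for $0\le t\le k-1$ denotes the coefficient of $q^t$ in the remainder of $(q)_{s-1}$ upon division by $1-q^k$ (a polynomial of degree at most $k-1$), and this is extended to all integers $t$ by $k$-periodicity. $c_k(t)=\sum_{1\le h\le k,\ \gcd(h,k)=1}e^{2\pi i h t/k}$ is the Ramanujan sum. The shifted Varshamov–Tenengolts code $\mathrm{SVT}_{t,r}(s,k)$ ($r\in\{0,1\}$) is the set of binary vectors $(b_1,\dots,b_s)$ with $\sum_j j b_j\equiv t \pmod k$ and $\sum_j b_j\equiv r\pmod 2$. *)

theory Defs
  imports Complex_Main "HOL-Computational_Algebra.Polynomial"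
begin

definition qpoch :: "nat \<Rightarrow> rat poly" where
  "qpoch m = (\<Prod>i\<in>{1..m}. 1 - monom 1 i)"

definition sigma0 :: "nat \<Rightarrow> int \<Rightarrow> nat \<Rightarrow> rat" where
  "sigma0 k t s = coeff (qpoch (s - 1) mod (1 - monom 1 k)) (nat (t mod int k))"

definition ramanujan :: "nat \<Rightarrow> int \<Rightarrow> complex" where
  "ramanujan k t = (\<Sum>h\<in>{h\<in>{1..k}. coprime h k}.
      exp (2 * of_real pi * \<i> * of_nat h * of_int t / of_nat k))"

text \<open>Shifted Varshamov-Tenengolts code; a vector (b_1,...,b_s) is a bool list bs
  of length s with b_j = bs ! (j-1).\<close>
definition SVT :: "int \<Rightarrow> nat \<Rightarrow> nat \<Rightarrow> nat \<Rightarrow> bool list set" where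
  "SVT t r s k = {bs. length bs = s \<and>
     (\<Sum>j\<in>{1..s}. int j * (if bs ! (j - 1) then 1 else 0)) mod int k = t mod int k \<and>
     (\<Sum>j\<in>{1..s}. (if bs ! (j - 1) then 1 else 0::nat)) mod 2 = r mod 2}"

end

theory Submission
  imports Defs "HOL-Analysis.Analysis"
begin

fun qb :: "complex \<Rightarrow> nat \<Rightarrow> nat \<Rightarrow> complex" where
  "qb q m 0 = 1"
| "qb q 0 (Suc j) = 0"
| "qb q (Suc m) (Suc j) = qb q m j + q^(Suc j) * qb q m (Suc j)"

lemma qb_zero: "m < j \<Longrightarrow> qb q m j = 0"
proof (induction m arbitrary: j)
  case 0 then show ?case by (cases j) auto
next
  case (Suc m) then show ?case by (cases j) auto
qed

lemma qb_diag: "qb q m m = 1"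
  by (induction m) (auto simp: qb_zero)

lemma qb_pascal2: "j \<le> m \<Longrightarrow> qb q (Suc m) (Suc j) = q^(m-j) * qb q m j + qb q m (Suc j)"
proof (induction m arbitrary: j)
  case 0 then show ?case by simp
next
  case (Suc m)
  show ?case
  proof (cases j)
    case 0
    have "qb q (Suc m) (Suc 0) = q^m + qb q m 1" using Suc.IH[of 0] by simp
    then show ?thesis using 0 by (simp add: algebra_simps)
  next
    case (Suc j')
    have j': "j' \<le> m" using Suc.prems Suc by simp
    have IH1: "qb q (Suc m) (Suc j') = q^(m-j') * qb q m j' + qb q m (Suc j')"
      using Suc.IH[OF j'] .
    show ?thesis
    proof (cases "j' = m")
      case True
      then show ?thesis using Suc by (simp add: qb_zero qb_diag)
    next
      case False
      then have j'': "Suc j' \<le> m" using j' by simp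
      have IH2: "qb q (Suc m) (Suc (Suc j')) = q^(m - Suc j') * qb q m (Suc j') + qb q m (Suc (Suc j'))"
        using Suc.IH[OF j''] .
      have ee: "Suc (Suc j') + (m - Suc j') = (m - j') + Suc j'" using j'' by simp
      have e: "q ^ Suc (Suc j') * q^(m - Suc j') = q^(m-j') * q^(Suc j')"
        by (simp only: power_add[symmetric] ee)
      have "qb q (Suc (Suc m)) (Suc j) = qb q (Suc m) (Suc j') + q^(Suc (Suc j')) * qb q (Suc m) (Suc (Suc j'))"
        using Suc by simp
      also have "\<dots> = q^(m-j') * qb q m j' + qb q m (Suc j') + (q ^ Suc (Suc j') * q^(m - Suc j')) * qb q m (Suc j') + q ^ Suc (Suc j') * qb q m (Suc (Suc j'))"
        unfolding IH1 IH2 by (simp add: algebra_simps)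
      also have "\<dots> = q^(m-j') * (qb q m j' + q^(Suc j') * qb q m (Suc j')) + (qb q m (Suc j') + q ^ Suc (Suc j') * qb q m (Suc (Suc j')))"
        unfolding e by (simp add: algebra_simps)
      also have "\<dots> = q ^ (Suc m - j) * qb q (Suc m) j + qb q (Suc m) (Suc j)"
        using Suc by simp
      finally show ?thesis .
    qed
  qed
qed

lemma qb_ratio: "(1 - q^(Suc j)) * qb q m (Suc j) = (1 - q^(m-j)) * qb q m j"
proof (cases "j \<le> m")
  case True
  have "qb q m j + q^(Suc j) * qb q m (Suc j) = q^(m-j) * qb q m j + qb q m (Suc j)"
    using qb_pascal2[OF True, of q] by simp
  then show ?thesis by (simp add: algebra_simps)
next
  case False then show ?thesis by (simp add: qb_zero)
qed

lemma qb_absorb: "(1 - q^(Suc j)) * qb q (Suc m) (Suc j) = (1 - q^(Suc m)) * qb q m j"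
proof (cases "j \<le> m")
  case True
  have e: "q^(Suc j) * q^(m-j) = q^(Suc m)" using True by (simp flip: power_add)
  have "(1 - q^(Suc j)) * qb q (Suc m) (Suc j) = (1 - q^(Suc j)) * qb q m j + q^(Suc j) * ((1 - q^(Suc j)) * qb q m (Suc j))"
    by (simp add: algebra_simps)
  also have "\<dots> = (1 - q^(Suc j)) * qb q m j + q^(Suc j) * ((1 - q^(m-j)) * qb q m j)"
    by (simp only: qb_ratio)
  also have "\<dots> = (1 - q^(Suc j) * q^(m-j)) * qb q m j" by (simp add: algebra_simps)
  finally show ?thesis unfolding e .
next
  case False then show ?thesis by (simp add: qb_zero)
qed

lemma qb_RS: "qb q (Suc (Suc m)) (Suc j) = qb q (Suc m) (Suc j) + qb q (Suc m) j - (1 - q^(Suc m)) * qb q m j"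
proof -
  have a: "(1 - q^(Suc j)) * qb q (Suc m) (Suc j) = (1 - q^(Suc m)) * qb q m j" by (rule qb_absorb)
  have b: "qb q (Suc (Suc m)) (Suc j) = qb q (Suc m) j + q^(Suc j) * qb q (Suc m) (Suc j)" by (rule qb.simps(3))
  have c: "q^(Suc j) * qb q (Suc m) (Suc j) = qb q (Suc m) (Suc j) - (1 - q^(Suc m)) * qb q m j"
    using a by (simp del: qb.simps add: algebra_simps)
  show ?thesis unfolding b c by (simp del: qb.simps)
qed

definition qS :: "complex \<Rightarrow> nat \<Rightarrow> complex" where
  "qS q m = (\<Sum>j<Suc m. (-1)^j * qb q m j)"

lemma qS_ext: "m < n \<Longrightarrow> (\<Sum>j<n. (-1)^j * qb q m j) = qS q m"
proof (induction n)
  case 0 then show ?case by simp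
next
  case (Suc n)
  show ?case
  proof (cases "m < n")
    case True then show ?thesis using Suc by (simp add: qb_zero)
  next
    case False then have "n = m" using Suc by simp
    then show ?thesis by (simp add: qS_def)
  qed
qed

lemma qS_rec: "qS q (Suc (Suc m)) = (1 - q^(Suc m)) * qS q m"
proof -
  let ?n = "Suc (Suc m)"
  have "qS q (Suc (Suc m)) = (\<Sum>j<Suc ?n. (-1)^j * qb q ?n j)" by (simp add: qS_def)
  also have "\<dots> = 1 + (\<Sum>j<?n. (-1)^(Suc j) * qb q ?n (Suc j))"
    by (simp only: sum.lessThan_Suc_shift) simp
  also have "\<dots> = 1 - (\<Sum>j<?n. (-1)^j * qb q (Suc m) (Suc j)) - (\<Sum>j<?n. (-1)^j * qb q (Suc m) j)
       + (1 - q^(Suc m)) * (\<Sum>j<?n. (-1)^j * qb q m j)"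
    by (simp del: qb.simps add: qb_RS algebra_simps sum.distrib sum_subtractf sum_distrib_left sum_negf)
  also have "(\<Sum>j<?n. (-1)^j * qb q (Suc m) (Suc j)) = 1 - qS q (Suc m)"
  proof -
    have "qS q (Suc m) = (\<Sum>j<Suc ?n. (-1)^j * qb q (Suc m) j)" by (rule qS_ext[symmetric]) simp
    also have "\<dots> = 1 + (\<Sum>j<?n. (-1)^(Suc j) * qb q (Suc m) (Suc j))"
      by (simp only: sum.lessThan_Suc_shift) simp
    finally show ?thesis by (simp add: sum_negf)
  qed
  also have "(\<Sum>j<?n. (-1)^j * qb q (Suc m) j) = qS q (Suc m)" by (rule qS_ext) simp
  also have "(\<Sum>j<?n. (-1)^j * qb q m j) = qS q m" by (rule qS_ext) simp
  finally show ?thesis by simp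
qed

lemma qS_even: "qS q (2 * s) = (\<Prod>i<s. 1 - q^(2*i+1))"
proof (induction s)
  case 0 then show ?case by (simp add: qS_def)
next
  case (Suc s)
  have "qS q (2 * Suc s) = qS q (Suc (Suc (2 * s)))" by simp
  also have "\<dots> = (1 - q^(Suc (2 * s))) * qS q (2 * s)" by (rule qS_rec)
  finally show ?case using Suc by (simp add: mult.commute)
qed


lemma qb_root:
  assumes q1: "q^(Suc m) = 1" and qn: "\<And>i. 0 < i \<Longrightarrow> i \<le> m \<Longrightarrow> q^i \<noteq> 1"
  shows "j \<le> m \<Longrightarrow> qb q m j = (-1)^j * (inverse q)^(j*(j+1) div 2)"
proof (induction j)
  case 0 then show ?case by simp
next
  case (Suc j)
  have q0: "q \<noteq> 0" using q1 by auto
  have jm: "j \<le> m" using Suc by simp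
  have IH: "qb q m j = (-1)^j * (inverse q)^(j*(j+1) div 2)" using Suc.IH jm by simp
  have mj: "m - j + Suc j = Suc m" using jm by simp
  have "q^(m-j) * q^(Suc j) = 1" by (simp only: power_add[symmetric] mj q1)
  then have qmj: "q^(m-j) = inverse q ^ (Suc j)" using q0
    by (simp add: field_simps power_inverse)
  have nz: "1 - q^(Suc j) \<noteq> 0" using qn[of "Suc j"] Suc.prems by auto
  have "(1 - q^(Suc j)) * qb q m (Suc j) = (1 - inverse q ^ (Suc j)) * qb q m j"
    using qb_ratio[of q j m] qmj by simp
  also have "1 - inverse q ^ (Suc j) = - (inverse q ^ (Suc j)) * (1 - q^(Suc j))"
    using q0 by (simp add: field_simps power_inverse)
  finally have "(1 - q^(Suc j)) * qb q m (Suc j) = (1 - q^(Suc j)) * (- (inverse q ^ (Suc j)) * qb q m j)"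
    by (simp add: algebra_simps)
  then have "qb q m (Suc j) = - (inverse q ^ (Suc j)) * qb q m j"
    by (rule mult_left_cancel[OF nz, THEN iffD1])
  also have "Suc j * (Suc j + 1) div 2 = j * (j+1) div 2 + Suc j"
    by (simp add: algebra_simps)
  ultimately show ?case using IH by (simp add: power_add)
qed

lemma qS_root:
  assumes q1: "q^(Suc m) = 1" and qn: "\<And>i. 0 < i \<Longrightarrow> i \<le> m \<Longrightarrow> q^i \<noteq> 1"
  shows "qS q m = (\<Sum>j<Suc m. (inverse q)^(j*(j+1) div 2))"
  unfolding qS_def
proof (rule sum.cong[OF refl])
  fix j assume "j \<in> {..<Suc m}"
  then have "j \<le> m" by simp
  then show "(-1)^j * qb q m j = (inverse q)^(j*(j+1) div 2)"
    using qb_root[OF q1 qn] by (simp flip: mult.assoc power_mult_distrib)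
qed

lemma periodic_sum_shift:
  fixes f :: "nat \<Rightarrow> complex"
  assumes "\<And>x. f (x + k) = f x"
  shows "(\<Sum>j<k. f (j + c)) = (\<Sum>j<k. f j)"
proof (induction c)
  case 0 then show ?case by simp
next
  case (Suc c)
  have "(\<Sum>j<Suc k. f (j + c)) = f c + (\<Sum>j<k. f (Suc j + c))"
    by (simp only: sum.lessThan_Suc_shift) simp
  moreover have "(\<Sum>j<Suc k. f (j + c)) = (\<Sum>j<k. f (j + c)) + f (k + c)" by simp
  moreover have "f (k + c) = f c" using assms[of c] by (simp add: add.commute)
  ultimately have "(\<Sum>j<k. f (Suc j + c)) = (\<Sum>j<k. f (j + c))" by (simp add: add.commute)
  then show ?case using Suc by simp
qed

lemma par_flip: assumes "a \<le> 2 * s + 1" shows "(2 * s + 1 - a) mod 2 \<noteq> a mod (2::nat)"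
proof -
  have "a + (2 * s + 1 - a) = 2 * s + 1" using assms by simp
  then have "odd (a + (2 * s + 1 - a))" by simp
  then show ?thesis by (auto simp: mod2_eq_if split: if_splits)
qed

lemma GL:
  fixes f :: "nat \<Rightarrow> complex"
  assumes anti: "\<And>m. 1 \<le> m \<Longrightarrow> m \<le> 2 * s \<Longrightarrow> f (2 * s + 1 - m) = - f m" and p: "p < 2"
  shows "(\<Prod>m\<in>{m\<in>{1..2 * s}. m mod 2 = p}. f m)
       = (-1)^card {m\<in>{s+1..2 * s}. m mod 2 = p} * (\<Prod>m\<in>{1..s}. f m)"
proof -
  define A1 where "A1 = {m\<in>{1..s}. m mod 2 = p}"
  define A2 where "A2 = {m\<in>{s+1..2 * s}. m mod 2 = p}"
  define B where "B = {m\<in>{1..s}. m mod 2 \<noteq> p}"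
  have AU: "{m\<in>{1..2 * s}. m mod 2 = p} = A1 \<union> A2" unfolding A1_def A2_def by auto
  have "(\<Prod>m\<in>A2. f m) = (\<Prod>m\<in>A2. - f (2 * s + 1 - m))"
    by (rule prod.cong[OF refl]) (use anti in \<open>auto simp: A2_def\<close>)
  also have "\<dots> = (-1)^card A2 * (\<Prod>m\<in>A2. f (2 * s + 1 - m))"
    by (rule prod_uminus)
  also have "(\<Prod>m\<in>A2. f (2 * s + 1 - m)) = (\<Prod>m\<in>B. f m)"
  proof (rule prod.reindex_bij_witness[where i = "\<lambda>e. 2 * s + 1 - e" and j = "\<lambda>m. 2 * s + 1 - m"])
    fix a assume "a \<in> A2" then show "2 * s + 1 - (2 * s + 1 - a) = a" by (auto simp: A2_def)
  next
    fix a assume a: "a \<in> A2"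
    then have "a \<le> 2 * s + 1" "s + 1 \<le> a" "a mod 2 = p" "a \<le> 2 * s" by (auto simp: A2_def)
    then show "2 * s + 1 - a \<in> B" using par_flip[of a s] by (auto simp: B_def)
  next
    fix b assume "b \<in> B" then show "2 * s + 1 - (2 * s + 1 - b) = b" by (auto simp: B_def)
  next
    fix b assume "b \<in> B"
    then have b: "b \<le> 2 * s + 1" "1 \<le> b" "b \<le> s" "b mod 2 \<noteq> p" by (auto simp: B_def)
    have "(2 * s + 1 - b) mod 2 = p" using par_flip[OF b(1)] b(4) p by linarith
    then show "2 * s + 1 - b \<in> A2" using b by (auto simp: A2_def)
  qed simp
  finally have e2: "(\<Prod>m\<in>A2. f m) = (-1)^card A2 * (\<Prod>m\<in>B. f m)" .
  have "(\<Prod>m\<in>{m\<in>{1..2 * s}. m mod 2 = p}. f m) = (\<Prod>m\<in>A1. f m) * (\<Prod>m\<in>A2. f m)"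
    unfolding AU by (rule prod.union_disjoint) (auto simp: A1_def A2_def)
  also have "\<dots> = (-1)^card A2 * ((\<Prod>m\<in>A1. f m) * (\<Prod>m\<in>B. f m))" using e2 by simp
  also have "(\<Prod>m\<in>A1. f m) * (\<Prod>m\<in>B. f m) = (\<Prod>m\<in>A1 \<union> B. f m)"
    by (rule prod.union_disjoint[symmetric]) (auto simp: A1_def B_def)
  also have "A1 \<union> B = {1..s}" by (auto simp: A1_def B_def)
  finally show ?thesis by (simp add: A2_def)
qed


definition hh :: "complex \<Rightarrow> nat \<Rightarrow> complex" where
  "hh z m = z^m - inverse z ^ m"

lemma hh_anti:
  assumes "z^k = 1" "m \<le> k" "0 < k" shows "hh z (k - m) = - hh z m"
proof -
  have z0: "z \<noteq> 0" using assms(1,3) by (cases k) auto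
  have "z^(k-m) * z^m = 1" using assms by (simp flip: power_add)
  then have a: "z^(k-m) = inverse z ^ m" using z0 by (simp add: field_simps power_inverse)
  then have b: "inverse z ^ (k-m) = z^m" using z0 by (simp add: power_inverse)
  show ?thesis unfolding hh_def a b by simp
qed

lemma sum_odd_sq: "(\<Sum>i<s. 2 * i + 1) = (s::nat)^2"
  by (induction s) (auto simp: power2_eq_square)

lemma two_i_ne: "2 * (i::nat) \<noteq> 2 * s + 1"
  by presburger

lemma K:
  fixes w :: complex and s :: nat
  assumes prim: "\<And>n. w^n = 1 \<longleftrightarrow> (2 * s + 1) dvd n" and N4: "4 dvd s * (s + 1)"
  shows "(\<Prod>j\<in>{1..s}. 1 - w^j) = w^(s * (s + 1) div 4) * (\<Sum>x<2 * s + 1. w^(x^2))"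
proof -
  define k where "k = 2 * s + 1"
  have wk: "w^k = 1" using prim[of k] by (simp add: k_def)
  have w0: "w \<noteq> 0" using wk by (auto simp: k_def)
  define q where "q = inverse w ^ 2"
  have q1: "q^(Suc (2 * s)) = 1"
  proof -
    have "q^(Suc (2 * s)) = (inverse w ^ 2)^k" by (simp add: q_def k_def)
    also have "\<dots> = (inverse w ^ k)^2" by (simp add: mult.commute flip: power_mult)
    also have "\<dots> = 1" using wk by (simp add: power_inverse)
    finally show ?thesis .
  qed
  have qn: "q^i \<noteq> 1" if "0 < i" "i \<le> 2 * s" for i
  proof
    assume "q^i = 1"
    then have "w^(2 * i) = 1" unfolding q_def using w0
      by (simp add: power_inverse flip: power_mult)
    then have "k dvd 2 * i" using prim by (simp add: k_def)
    then obtain c where c: "2 * i = k * c" by auto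
    show False
    proof (cases c)
      case 0 then show ?thesis using c that by simp
    next
      case (Suc c')
      show ?thesis
      proof (cases c')
        case 0 then show ?thesis using c Suc two_i_ne[of i s] by (simp add: k_def)
      next
        case (Suc c'')
        then have "2 * i \<ge> 2 * k" using c \<open>c = Suc c'\<close> by simp
        then show ?thesis using that by (simp add: k_def)
      qed
    qed
  qed
  have iq: "inverse q = w^2" by (simp add: q_def power_inverse)
  have "qS q (2 * s) = (\<Sum>j<Suc (2 * s). (inverse q)^(j*(j+1) div 2))"
    by (rule qS_root[OF q1 qn]) auto
  also have "\<dots> = (\<Sum>j<k. w^(j*(j+1)))"
  proof (rule sum.cong)
    fix j assume "j \<in> {..<k}"
    have ev: "even (j * (j + 1))" by simp
    have "(inverse q)^(j*(j+1) div 2) = (w^2)^(j*(j+1) div 2)" by (simp only: iq)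
    also have "\<dots> = w^(2 * (j*(j+1) div 2))" by (simp only: power_mult)
    also have "2 * (j*(j+1) div 2) = j*(j+1)" using ev by (rule even_two_times_div_two)
    finally show "(inverse q)^(j*(j+1) div 2) = w^(j*(j+1))" .
  qed (simp add: k_def)
  finally have S1: "(\<Sum>j<k. w^(j*(j+1))) = (\<Prod>i<s. 1 - q^(2*i+1))" by (simp add: qS_even)
  \<comment> \<open>completing the square\<close>
  have per: "w^((x + k)^2) = w^(x^2)" for x
  proof -
    have "(x + k)^2 = x^2 + k * (2 * x + k)" by (simp add: power2_eq_square algebra_simps)
    then show ?thesis using wk by (simp add: power_add power_mult)
  qed
  have G1: "(\<Sum>x<k. w^(x^2)) = w^((s+1)^2) * (\<Sum>j<k. w^(j*(j+1)))"
  proof -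
    have "(\<Sum>x<k. w^(x^2)) = (\<Sum>j<k. w^((j + (s+1))^2))"
      using periodic_sum_shift[of "\<lambda>x. w^(x^2)" k "s+1"] per by simp
    also have "\<dots> = (\<Sum>j<k. w^((s+1)^2) * w^(j*(j+1)))"
    proof (rule sum.cong[OF refl])
      fix j
      have "(j + (s+1))^2 = j*(j+1) + (s+1)^2 + k * j"
        by (simp add: k_def power2_eq_square algebra_simps)
      then have "w^((j + (s+1))^2) = w^(j*(j+1)) * w^((s+1)^2) * w^(k*j)" by (simp only: power_add)
      also have "w^(k*j) = 1" using wk by (simp add: power_mult)
      finally show "w^((j + (s+1))^2) = w^((s+1)^2) * w^(j*(j+1))" by (simp add: mult.commute)
    qed
    finally show ?thesis by (simp add: sum_distrib_left)
  qed
  have ws: "w^((s+1)^2) = w^(s^2)"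
  proof -
    have "(s+1)^2 = s^2 + k" by (simp add: k_def power2_eq_square)
    then show ?thesis using wk by (simp add: power_add)
  qed
  have ws2: "w^(s^2) = (\<Prod>i<s. w^(2*i+1))"
    by (simp add: power_sum flip: sum_odd_sq)
  have G2: "(\<Sum>x<k. w^(x^2)) = (\<Prod>i<s. hh w (2*i+1))"
  proof -
    have "(\<Sum>x<k. w^(x^2)) = (\<Prod>i<s. w^(2*i+1)) * (\<Prod>i<s. 1 - q^(2*i+1))"
      using G1 S1 ws ws2 by simp
    also have "\<dots> = (\<Prod>i<s. w^(2*i+1) * (1 - q^(2*i+1)))" by (simp add: prod.distrib)
    also have "\<dots> = (\<Prod>i<s. hh w (2*i+1))"
    proof (rule prod.cong[OF refl])
      fix i
      have a: "q^(2*i+1) = inverse w ^ (2*i+1) * inverse w ^ (2*i+1)"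
        unfolding q_def by (simp add: power2_eq_square power_mult_distrib)
      have b: "w^n * inverse w ^ n = 1" for n using w0 by (simp add: power_inverse)
      have "w^(2*i+1) * q^(2*i+1) = inverse w ^ (2*i+1)"
        unfolding a by (simp only: mult.assoc[symmetric] b mult_1)
      then show "w^(2*i+1) * (1 - q^(2*i+1)) = hh w (2*i+1)"
        by (simp add: hh_def algebra_simps)
    qed
    finally show ?thesis .
  qed
  have anti_w: "hh w (2 * s + 1 - m) = - hh w m" if "m \<le> 2 * s" for m
    using hh_anti[of w k m] wk that by (simp add: k_def)
  have R1: "(\<Prod>i<s. hh w (2*i+1)) = (\<Prod>m\<in>{m\<in>{1..2 * s}. m mod 2 = 1}. hh w m)"
  proof (rule prod.reindex_bij_witness[where i = "\<lambda>m. m div 2" and j = "\<lambda>i. 2*i+1"])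
    fix b assume "b \<in> {m\<in>{1..2 * s}. m mod 2 = 1}"
    then show "2 * (b div 2) + 1 = b" using div_mult_mod_eq[of b 2] by (simp add: mult.commute)
  next
    fix b assume b: "b \<in> {m\<in>{1..2 * s}. m mod 2 = 1}"
    then have "b div 2 * 2 + 1 = b" using div_mult_mod_eq[of b 2] by simp
    then show "b div 2 \<in> {..<s}" using b by auto
  qed auto
  have D1: "(\<Prod>m\<in>{m\<in>{1..2 * s}. m mod 2 = 1}. hh w m)
        = (-1)^card {m\<in>{s+1..2 * s}. m mod 2 = 1} * (\<Prod>m\<in>{1..s}. hh w m)"
    by (rule GL) (use anti_w in auto)
  \<comment> \<open>half angle\<close>
  define e where "e = w^(s+1)"
  have e2: "e^2 = w"
  proof -
    have "e^2 = w^((s+1)*2)" by (simp only: e_def power_mult)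
    also have "(s+1)*2 = k + 1" by (simp add: k_def)
    also have "w^(k+1) = w" using wk by simp
    finally show ?thesis .
  qed
  have ek: "e^k = 1"
  proof -
    have "e^k = w^((s+1)*k)" by (simp only: e_def power_mult)
    also have "\<dots> = (w^k)^(s+1)" by (simp only: mult.commute[of "s+1"] power_mult)
    finally show ?thesis using wk by simp
  qed
  have e0: "e \<noteq> 0" using e2 w0 by auto
  have anti_e: "hh e (2 * s + 1 - m) = - hh e m" if "m \<le> 2 * s" for m
    using hh_anti[of e k m] ek that by (simp add: k_def)
  have R2: "(\<Prod>j\<in>{1..s}. hh w j) = (\<Prod>m\<in>{m\<in>{1..2 * s}. m mod 2 = 0}. hh e m)"
  proof (rule prod.reindex_bij_witness[where i = "\<lambda>m. m div 2" and j = "\<lambda>i. 2*i"])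
    fix a assume "a \<in> {1..s}"
    have "e^(2 * a) = w^a" by (simp only: power_mult e2)
    then show "hh e (2 * a) = hh w a" unfolding hh_def by (simp add: power_inverse)
  qed auto
  have D2: "(\<Prod>m\<in>{m\<in>{1..2 * s}. m mod 2 = 0}. hh e m)
        = (-1)^card {m\<in>{s+1..2 * s}. m mod 2 = 0} * (\<Prod>m\<in>{1..s}. hh e m)"
    by (rule GL) (use anti_e in auto)
  have cardsum: "card {m\<in>{s+1..2 * s}. m mod 2 = 1} + card {m\<in>{s+1..2 * s}. m mod 2 = 0} = s"
  proof -
    have "card {m\<in>{s+1..2 * s}. m mod 2 = 1} + card {m\<in>{s+1..2 * s}. m mod 2 = 0}
        = card ({m\<in>{s+1..2 * s}. m mod 2 = 1} \<union> {m\<in>{s+1..2 * s}. m mod 2 = 0})"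
      by (rule card_Un_disjoint[symmetric]) auto
    also have "{m\<in>{s+1..2 * s}. m mod 2 = 1} \<union> {m\<in>{s+1..2 * s}. m mod 2 = 0} = {s+1..2 * s}" by auto
    finally show ?thesis by simp
  qed
  have G3: "(\<Sum>x<k. w^(x^2)) = (-1)^s * (\<Prod>m\<in>{1..s}. hh e m)"
  proof -
    have "(\<Sum>x<k. w^(x^2)) = (-1)^card {m\<in>{s+1..2 * s}. m mod 2 = 1} * ((-1)^card {m\<in>{s+1..2 * s}. m mod 2 = 0} * (\<Prod>m\<in>{1..s}. hh e m))"
      using G2 R1 D1 R2 D2 by simp
    also have "\<dots> = (-1)^(card {m\<in>{s+1..2 * s}. m mod 2 = 1} + card {m\<in>{s+1..2 * s}. m mod 2 = 0}) * (\<Prod>m\<in>{1..s}. hh e m)"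
      by (simp only: power_add mult.assoc)
    finally show ?thesis by (simp only: cardsum)
  qed
  have P1: "(\<Prod>j\<in>{1..s}. 1 - w^j) = (\<Prod>j\<in>{1..s}. (-1) * (e^j * hh e j))"
  proof (rule prod.cong[OF refl])
    fix j
    have "e^j * inverse e ^ j = 1" using e0 by (simp add: power_inverse field_simps)
    moreover have "w^j = e^j * e^j"
    proof -
      have "w^j = (e^2)^j" by (simp only: e2)
      also have "\<dots> = (e^j)^2" by (simp only: power_mult[symmetric] mult.commute)
      finally show ?thesis by (simp add: power2_eq_square)
    qed
    ultimately show "1 - w^j = (-1) * (e^j * hh e j)" unfolding hh_def by (simp add: algebra_simps)
  qed
  also have "\<dots> = (-1)^s * (e^(\<Sum>j\<in>{1..s}. j) * (\<Prod>j\<in>{1..s}. hh e j))"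
    by (simp only: prod.distrib power_sum prod_constant card_atLeastAtMost) simp
  also have "(\<Sum>j\<in>{1..s}. j) = 2 * (s * (s + 1) div 4)"
  proof -
    have "(\<Sum>j\<in>{1..s}. j) = (\<Sum>j\<in>{0..s}. j)" using sum.atLeast_Suc_atMost[of 0 s "\<lambda>j. j"] by simp
    also have "\<dots> = s * (s + 1) div 2" using gauss_sum_nat[of s] by simp
    finally show ?thesis using N4 by auto
  qed
  also have "e^(2 * (s * (s + 1) div 4)) = w^(s * (s + 1) div 4)" by (simp add: power_mult e2)
  finally show ?thesis using G3 by (simp add: k_def)
qed


section \<open>Roots of unity\<close>

definition E :: "nat \<Rightarrow> int \<Rightarrow> complex" where
  "E n x = exp (2 * of_real pi * \<i> * of_int x / of_nat n)"

lemma E_add: "E n (x + y) = E n x * E n y"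
  unfolding E_def by (simp add: exp_add[symmetric] add_divide_distrib algebra_simps)

lemma E_zero: "E n 0 = 1" by (simp add: E_def)

lemma E_nat_mult: "E n (int a * x) = E n x ^ a"
proof -
  have "2 * of_real pi * \<i> * of_int (int a * x) / of_nat n = of_nat a * (2 * of_real pi * \<i> * of_int x / of_nat n)"
    by simp
  then show ?thesis unfolding E_def by (simp only: exp_of_nat_mult)
qed

lemma E_eq_1: assumes "0 < n" shows "E n x = 1 \<longleftrightarrow> int n dvd x"
proof -
  have ee: "2 * of_real pi * \<i> * of_int x / of_nat n = \<i> * complex_of_real (2 * pi * x / n)"
    by simp
  have "E n x = 1 \<longleftrightarrow> (\<exists>m::int. 2 * pi * x / n = of_int (2 * m) * pi)"
    unfolding E_def ee exp_eq_1 by simp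
  also have "\<dots> \<longleftrightarrow> (\<exists>m::int. x = n * m)"
  proof
    assume "\<exists>m::int. 2 * pi * x / n = of_int (2 * m) * pi"
    then obtain m :: int where "2 * pi * x / n = of_int (2 * m) * pi" by blast
    then have "real_of_int x = real n * of_int m" using assms by (simp add: field_simps)
    then have "x = int n * m" by (metis of_int_eq_iff of_int_mult of_int_of_nat_eq)
    then show "\<exists>m::int. x = n * m" by blast
  next
    assume "\<exists>m::int. x = n * m"
    then obtain m :: int where "x = n * m" by blast
    then have "2 * pi * x / n = of_int (2 * m) * pi" using assms by (simp add: field_simps)
    then show "\<exists>m::int. 2 * pi * x / n = of_int (2 * m) * pi" by blast
  qed
  also have "\<dots> \<longleftrightarrow> int n dvd x" by (auto simp: dvd_def)
  finally show ?thesis .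
qed

lemma E_period: "E n (int n * y) = 1"
proof (cases "n = 0")
  case True then show ?thesis by (simp add: E_def)
next
  case False then show ?thesis using E_eq_1[of n "int n * y"] by simp
qed

lemma E_sq: "E (m * m) (int m * x) = E m x"
proof (cases "m = 0")
  case True then show ?thesis by (simp add: E_def)
next
  case False
  then show ?thesis unfolding E_def by (simp add: field_simps)
qed

lemma orth: assumes "0 < n"
  shows "(\<Sum>a<n. E n (int a * x)) = (if int n dvd x then of_nat n else 0)"
proof (cases "int n dvd x")
  case True
  then have "E n x = 1" using E_eq_1[OF assms] by simp
  then show ?thesis using True by (simp add: E_nat_mult)
next
  case False
  then have r1: "E n x \<noteq> 1" using E_eq_1[OF assms] by simp
  have rn: "E n x ^ n = 1" using E_period[of n x] by (simp add: E_nat_mult)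
  have "(\<Sum>a<n. E n (int a * x)) = (\<Sum>a<n. E n x ^ a)" by (simp add: E_nat_mult)
  also have "\<dots> = 0" using geometric_sum[OF r1, of n] rn by simp
  finally show ?thesis using False by simp
qed

definition posv :: "bool list \<Rightarrow> nat" where
  "posv bs = (\<Sum>j\<in>{1..length bs}. j * (if bs ! (j - 1) then 1 else 0))"

definition wtv :: "bool list \<Rightarrow> nat" where
  "wtv bs = (\<Sum>j\<in>{1..length bs}. (if bs ! (j - 1) then 1 else 0))"

definition Ls :: "nat \<Rightarrow> bool list set" where
  "Ls s = {bs. length bs = s}"

lemma finite_Ls: "finite (Ls s)"
proof -
  have "Ls s \<subseteq> {xs. set xs \<subseteq> (UNIV :: bool set) \<and> length xs \<le> s}" by (auto simp: Ls_def)
  moreover have "finite {xs. set xs \<subseteq> (UNIV :: bool set) \<and> length xs \<le> s}"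
    by (rule finite_lists_length_le) simp
  ultimately show ?thesis by (rule finite_subset)
qed

lemma posv_snoc: "posv (bs @ [b]) = posv bs + (if b then Suc (length bs) else 0)"
proof -
  have "posv (bs @ [b]) = (\<Sum>j\<in>{1..length bs}. j * (if (bs @ [b]) ! (j - 1) then 1 else 0))
      + Suc (length bs) * (if b then 1 else 0)"
    by (simp add: posv_def)
  also have "(\<Sum>j\<in>{1..length bs}. j * (if (bs @ [b]) ! (j - 1) then 1 else 0)) = posv bs"
    unfolding posv_def by (rule sum.cong) (auto simp: nth_append)
  finally show ?thesis by simp
qed

lemma wtv_snoc: "wtv (bs @ [b]) = wtv bs + (if b then 1 else 0)"
proof -
  have "wtv (bs @ [b]) = (\<Sum>j\<in>{1..length bs}. (if (bs @ [b]) ! (j - 1) then 1 else 0))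
      + (if b then 1 else 0)"
    by (simp add: wtv_def)
  also have "(\<Sum>j\<in>{1..length bs}. (if (bs @ [b]) ! (j - 1) then 1 else 0)) = wtv bs"
    unfolding wtv_def by (rule sum.cong) (auto simp: nth_append)
  finally show ?thesis by simp
qed

lemma Ls_Suc: "Ls (Suc s) = (\<lambda>(bs, b). bs @ [b]) ` (Ls s \<times> UNIV)"
proof
  show "Ls (Suc s) \<subseteq> (\<lambda>(bs, b). bs @ [b]) ` (Ls s \<times> UNIV)"
  proof
    fix xs assume "xs \<in> Ls (Suc s)"
    then have l: "length xs = Suc s" by (simp add: Ls_def)
    then have "xs = butlast xs @ [last xs]" by (metis append_butlast_last_id list.size(3) nat.distinct(1))
    moreover have "butlast xs \<in> Ls s" using l by (simp add: Ls_def)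
    ultimately show "xs \<in> (\<lambda>(bs, b). bs @ [b]) ` (Ls s \<times> UNIV)" by force
  qed
qed (auto simp: Ls_def)

lemma gen_ident:
  fixes x :: "'a::comm_ring_1"
  shows "(\<Sum>bs\<in>Ls s. (-1)^(wtv bs) * x^(posv bs)) = (\<Prod>j\<in>{1..s}. 1 - x^j)"
proof (induction s)
  case 0
  have "Ls 0 = {[]}" by (auto simp: Ls_def)
  then show ?case by (simp add: posv_def wtv_def)
next
  case (Suc s)
  have inj: "inj_on (\<lambda>(bs, b). bs @ [b]) (Ls s \<times> (UNIV :: bool set))"
    by (auto simp: inj_on_def)
  have "(\<Sum>bs\<in>Ls (Suc s). (-1)^(wtv bs) * x^(posv bs))
      = (\<Sum>p\<in>Ls s \<times> (UNIV :: bool set). (-1)^(wtv (fst p @ [snd p])) * x^(posv (fst p @ [snd p])))"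
    unfolding Ls_Suc sum.reindex[OF inj] by (simp add: o_def split_def)
  also have "\<dots> = (\<Sum>bs\<in>Ls s. \<Sum>b\<in>(UNIV :: bool set). (-1)^(wtv (bs @ [b])) * x^(posv (bs @ [b])))"
    by (simp add: sum.cartesian_product split_def)
  also have "\<dots> = (\<Sum>bs\<in>Ls s. (-1)^(wtv bs) * x^(posv bs) * (1 - x^(Suc s)))"
  proof (rule sum.cong[OF refl])
    fix bs assume "bs \<in> Ls s"
    then have l: "length bs = s" by (simp add: Ls_def)
    show "(\<Sum>b\<in>(UNIV :: bool set). (-1)^(wtv (bs @ [b])) * x^(posv (bs @ [b])))
        = (-1)^(wtv bs) * x^(posv bs) * (1 - x^(Suc s))"
      by (simp add: UNIV_bool posv_snoc wtv_snoc l power_add algebra_simps)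
  qed
  also have "\<dots> = (\<Sum>bs\<in>Ls s. (-1)^(wtv bs) * x^(posv bs)) * (1 - x^(Suc s))"
    by (simp add: sum_distrib_right)
  also have "\<dots> = (\<Prod>j\<in>{1..Suc s}. 1 - x^j)"
    using Suc by (simp add: prod.nat_ivl_Suc')
  finally show ?case .
qed


section \<open>Polynomial side\<close>

definition Wp :: "nat \<Rightarrow> rat poly" where
  "Wp s = (\<Sum>bs\<in>Ls s. (-1)^(wtv bs) * monom 1 (posv bs))"

definition Wf :: "nat \<Rightarrow> nat \<Rightarrow> rat poly" where
  "Wf k s = (\<Sum>bs\<in>Ls s. (-1)^(wtv bs) * monom 1 (posv bs mod k))"

lemma monom_pow1: "(monom (1::rat) 1)^n = monom 1 n"
  by (simp add: monom_power)

lemma qpoch_Wp: "qpoch s = Wp s"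
proof -
  have "Wp s = (\<Sum>bs\<in>Ls s. (-1)^(wtv bs) * (monom (1::rat) 1)^(posv bs))"
    by (simp only: Wp_def monom_pow1)
  also have "\<dots> = (\<Prod>j\<in>{1..s}. 1 - (monom (1::rat) 1)^j)" by (rule gen_ident)
  also have "\<dots> = qpoch s" by (simp only: qpoch_def monom_pow1)
  finally show ?thesis by simp
qed

lemma dvd_monom_diff:
  "(1 - monom (1::rat) k) dvd (monom 1 n - monom 1 (n mod k))"
proof -
  have "monom (1::rat) n = monom 1 (n mod k) * (monom 1 k)^(n div k)"
    by (simp add: monom_power mult_monom add.commute)
  then have "monom (1::rat) n - monom 1 (n mod k) = monom 1 (n mod k) * ((monom 1 k)^(n div k) - 1)"
    by (simp add: algebra_simps)
  moreover have "(monom (1::rat) k - 1) dvd ((monom 1 k)^(n div k) - 1)"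
    by (simp add: power_diff_1_eq)
  ultimately have "(monom (1::rat) k - 1) dvd (monom 1 n - monom 1 (n mod k))" by simp
  moreover have mk: "1 - monom (1::rat) k = - (monom 1 k - 1)" by simp
  ultimately show ?thesis by (simp only: mk minus_dvd_iff)
qed

lemma degree_1_minus_monom: "0 < k \<Longrightarrow> degree (1 - monom (1::rat) k) = k"
proof -
  assume k: "0 < k"
  have "1 - monom (1::rat) k = - (monom 1 k + (-1))" by simp
  then have "degree (1 - monom (1::rat) k) = degree (monom (1::rat) k + (-1))" by (simp only: degree_minus)
  also have "\<dots> = degree (monom (1::rat) k)" by (rule degree_add_eq_left) (simp add: degree_monom_eq k)
  also have "\<dots> = k" by (simp add: degree_monom_eq)
  finally show ?thesis .
qed

lemma Wp_mod: assumes "0 < k" shows "Wp s mod (1 - monom 1 k) = Wf k s"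
proof -
  have dv: "(1 - monom (1::rat) k) dvd (Wp s - Wf k s)"
  proof -
    have "Wp s - Wf k s = (\<Sum>bs\<in>Ls s. (-1)^(wtv bs) * (monom 1 (posv bs) - monom 1 (posv bs mod k)))"
      by (simp add: Wp_def Wf_def sum_subtractf algebra_simps)
    also have "(1 - monom (1::rat) k) dvd \<dots>"
      by (rule dvd_sum) (simp add: dvd_monom_diff)
    finally show ?thesis .
  qed
  have dg: "degree (Wf k s) < degree (1 - monom (1::rat) k)"
  proof -
    have "degree (Wf k s) \<le> k - 1"
      unfolding Wf_def
    proof (rule degree_sum_le[OF finite_Ls])
      fix bs
      have "degree ((-1::rat poly)^(wtv bs) * monom 1 (posv bs mod k)) \<le> degree ((-1::rat poly)^(wtv bs)) + degree (monom (1::rat) (posv bs mod k))"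
        by (rule degree_mult_le)
      also have "\<dots> \<le> k - 1"
      proof -
        have d1: "degree ((-1::rat poly)^n) = 0" for n by (induction n) (simp_all add: degree_minus)
        have "posv bs mod k < k" using assms by simp
        then show ?thesis by (simp add: d1 degree_monom_eq)
      qed
      finally show "degree ((-1)^(wtv bs) * monom (1::rat) (posv bs mod k)) \<le> k - 1" .
    qed
    then show ?thesis using assms degree_1_minus_monom[OF assms] by simp
  qed
  have "Wp s mod (1 - monom 1 k) = Wf k s mod (1 - monom 1 k)"
    using dv by (simp add: mod_eq_dvd_iff)
  also have "\<dots> = Wf k s" using dg by (rule mod_poly_less)
  finally show ?thesis .
qed

lemma coeff_Wf: "coeff (Wf k s) r = (\<Sum>bs\<in>Ls s. (-1)^(wtv bs) * (if posv bs mod k = r then 1 else 0))"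
proof -
  have "coeff ((-1::rat poly)^n * p) r = (-1)^n * coeff p r" for n p
    by (induction n) auto
  then show ?thesis by (simp add: Wf_def coeff_sum coeff_monom)
qed


definition Dv :: "nat \<Rightarrow> nat \<Rightarrow> int \<Rightarrow> int" where
  "Dv s k t = (\<Sum>bs\<in>{bs\<in>Ls s. int (posv bs) mod int k = t mod int k}. (-1)^(wtv bs))"

lemma SVT_alt: "SVT t r s k = {bs\<in>Ls s. int (posv bs) mod int k = t mod int k \<and> wtv bs mod 2 = r mod 2}"
proof -
  have a: "(\<Sum>j\<in>{1..length bs}. int j * (if bs ! (j - 1) then 1 else 0)) = int (posv bs)" for bs
    unfolding posv_def of_nat_sum by (rule sum.cong) auto
  have b: "(\<Sum>j\<in>{1..length bs}. (if bs ! (j - 1) then 1 else 0::nat)) = wtv bs" for bs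
    by (simp add: wtv_def)
  show ?thesis
  proof (rule set_eqI)
    fix bs
    show "bs \<in> SVT t r s k \<longleftrightarrow> bs \<in> {bs\<in>Ls s. int (posv bs) mod int k = t mod int k \<and> wtv bs mod 2 = r mod 2}"
    proof (cases "length bs = s")
      case True then show ?thesis using a[of bs] b[of bs] unfolding SVT_def Ls_def by simp
    next
      case False then show ?thesis unfolding SVT_def Ls_def by simp
    qed
  qed
qed

lemma partA: "int (card (SVT t 0 s k)) - int (card (SVT t 1 s k)) = Dv s k t"
proof -
  define A where "A = {bs\<in>Ls s. int (posv bs) mod int k = t mod int k}"
  have fA: "finite A" unfolding A_def using finite_Ls by simp
  have S0: "SVT t 0 s k = {bs\<in>A. even (wtv bs)}" unfolding SVT_alt A_def by (auto simp: even_iff_mod_2_eq_zero)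
  have S1: "SVT t 1 s k = {bs\<in>A. odd (wtv bs)}" unfolding SVT_alt A_def by (auto simp: odd_iff_mod_2_eq_one)
  have "Dv s k t = (\<Sum>bs\<in>{bs\<in>A. even (wtv bs)} \<union> {bs\<in>A. odd (wtv bs)}. (-1)^(wtv bs))"
    unfolding Dv_def A_def[symmetric] by (rule sum.cong) auto
  also have "\<dots> = (\<Sum>bs\<in>{bs\<in>A. even (wtv bs)}. (-1)^(wtv bs)) + (\<Sum>bs\<in>{bs\<in>A. odd (wtv bs)}. (-1)^(wtv bs))"
    by (rule sum.union_disjoint) (use fA in auto)
  also have "(\<Sum>bs\<in>{bs\<in>A. even (wtv bs)}. (-1::int)^(wtv bs)) = (\<Sum>bs\<in>{bs\<in>A. even (wtv bs)}. 1)"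
    by (rule sum.cong) auto
  also have "(\<Sum>bs\<in>{bs\<in>A. odd (wtv bs)}. (-1::int)^(wtv bs)) = (\<Sum>bs\<in>{bs\<in>A. odd (wtv bs)}. -1)"
    by (rule sum.cong) auto
  finally show ?thesis unfolding S0 S1 by simp
qed

lemma sigma_D: assumes "0 < k" shows "sigma0 k t (s + 1) = of_int (Dv s k t)"
proof -
  have "sigma0 k t (s + 1) = coeff (Wf k s) (nat (t mod int k))"
    unfolding sigma0_def using Wp_mod[OF assms] by (simp add: qpoch_Wp)
  also have "\<dots> = (\<Sum>bs\<in>Ls s. (-1)^(wtv bs) * (if posv bs mod k = nat (t mod int k) then 1 else 0))"
    by (rule coeff_Wf)
  also have "\<dots> = (\<Sum>bs\<in>Ls s. if int (posv bs) mod int k = t mod int k then of_int ((-1)^(wtv bs)) else 0)"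
  proof (rule sum.cong[OF refl])
    fix bs
    have "posv bs mod k = nat (t mod int k) \<longleftrightarrow> int (posv bs) mod int k = t mod int k"
      using assms by (auto simp flip: zmod_int)
    then show "(-1)^(wtv bs) * (if posv bs mod k = nat (t mod int k) then 1 else 0)
       = (if int (posv bs) mod int k = t mod int k then of_int ((-1)^(wtv bs)) else (0::rat))" by simp
  qed
  also have "\<dots> = of_int (Dv s k t)"
    unfolding Dv_def of_int_sum by (simp add: sum.inter_filter[OF finite_Ls] of_int_power cong: if_cong)
  finally show ?thesis .
qed

lemma fourier: assumes "0 < k"
  shows "of_nat k * complex_of_int (Dv s k t)
       = (\<Sum>a<k. E k (int a * (- t)) * (\<Prod>j\<in>{1..s}. 1 - E k (int a)^j))"
proof -
  have "(\<Sum>a<k. E k (int a * (- t)) * (\<Prod>j\<in>{1..s}. 1 - E k (int a)^j))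
      = (\<Sum>a<k. E k (int a * (- t)) * (\<Sum>bs\<in>Ls s. (-1)^(wtv bs) * E k (int a)^(posv bs)))"
    by (simp only: gen_ident)
  also have "\<dots> = (\<Sum>a<k. \<Sum>bs\<in>Ls s. (-1)^(wtv bs) * E k (int a * (int (posv bs) - t)))"
  proof (rule sum.cong[OF refl])
    fix a
    have "E k (int a * (int (posv bs) - t)) = E k (int a * (- t)) * E k (int a)^(posv bs)" for bs
    proof -
      have "int a * (int (posv bs) - t) = int a * (- t) + int (posv bs) * int a" by (simp add: algebra_simps)
      then show ?thesis by (simp only: E_add E_nat_mult)
    qed
    then show "E k (int a * (- t)) * (\<Sum>bs\<in>Ls s. (-1)^(wtv bs) * E k (int a)^(posv bs))
        = (\<Sum>bs\<in>Ls s. (-1)^(wtv bs) * E k (int a * (int (posv bs) - t)))"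
      by (simp add: sum_distrib_left mult_ac)
  qed
  also have "\<dots> = (\<Sum>bs\<in>Ls s. (-1)^(wtv bs) * (\<Sum>a<k. E k (int a * (int (posv bs) - t))))"
    by (simp add: sum.swap[of _ "{..<k}"] sum_distrib_left)
  also have "\<dots> = (\<Sum>bs\<in>Ls s. (-1)^(wtv bs) * (if int (posv bs) mod int k = t mod int k then of_nat k else 0))"
  proof (rule sum.cong[OF refl])
    fix bs
    have "int k dvd int (posv bs) - t \<longleftrightarrow> int (posv bs) mod int k = t mod int k"
      by (simp add: mod_eq_dvd_iff)
    then show "(-1)^(wtv bs) * (\<Sum>a<k. E k (int a * (int (posv bs) - t)))
       = (-1)^(wtv bs) * (if int (posv bs) mod int k = t mod int k then of_nat k else 0)"
      by (simp add: orth[OF assms])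
  qed
  also have "\<dots> = of_nat k * (\<Sum>bs\<in>Ls s. if int (posv bs) mod int k = t mod int k then (-1)^(wtv bs) else 0)"
    by (simp add: sum_distrib_left if_distrib mult_ac cong: if_cong)
  also have "\<dots> = of_nat k * complex_of_int (Dv s k t)"
    unfolding Dv_def of_int_sum by (simp add: sum.inter_filter[OF finite_Ls])
  finally show ?thesis by simp
qed


section \<open>Evaluation at roots of unity\<close>

lemma vanish:
  assumes k: "k = 2 * s + 1" and "\<not> coprime a k"
  shows "(\<Prod>j\<in>{1..s}. 1 - E k (int a)^j) = 0"
proof -
  define g where "g = gcd a k"
  have g1: "g \<noteq> 1" using assms(2) by (simp add: g_def coprime_iff_gcd_eq_1)
  have g0: "g \<noteq> 0" using k by (simp add: g_def)
  have gk: "g dvd k" and ga: "g dvd a" by (simp_all add: g_def)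
  obtain c where c: "k = g * c" using gk by blast
  obtain a' where a': "a = g * a'" using ga by blast
  have c1: "1 \<le> c" using c k by (cases c) auto
  have g2: "2 \<le> g" using g0 g1 by linarith
  have "2 * c \<le> g * c" using g2 by simp
  then have cs: "c \<le> s" using c k by linarith
  have "E k (int a)^c = E k (int c * int a)" by (simp add: E_nat_mult)
  also have "int c * int a = int k * int a'" using c a' by simp
  also have "E k (int k * int a') = 1" by (rule E_period)
  finally have "1 - E k (int a)^c = 0" by simp
  then show ?thesis using c1 cs by (intro prod_zero) auto
qed

lemma primE:
  assumes k: "k = 2 * s + 1" and "coprime a k"
  shows "E k (int a)^n = 1 \<longleftrightarrow> (2 * s + 1) dvd n"
proof -
  have "E k (int a)^n = E k (int n * int a)" by (simp add: E_nat_mult)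
  also have "\<dots> = 1 \<longleftrightarrow> int k dvd int n * int a" by (rule E_eq_1) (simp add: k)
  also have "\<dots> \<longleftrightarrow> k dvd n * a" by (simp flip: of_nat_mult)
  also have "\<dots> \<longleftrightarrow> k dvd n" using assms(2) by (simp add: coprime_dvd_mult_left_iff coprime_commute)
  finally show ?thesis by (simp add: k)
qed

lemma rama_E: "ramanujan k x = (\<Sum>h\<in>{h\<in>{1..k}. coprime h k}. E k (int h * x))"
  unfolding ramanujan_def E_def by (simp add: mult.assoc)

lemma reidx:
  fixes f :: "nat \<Rightarrow> complex"
  assumes "1 < k"
  shows "(\<Sum>h\<in>{h\<in>{1..k}. coprime h k}. f h) = (\<Sum>a\<in>{a\<in>{..<k}. coprime a k}. f (k - a))"
proof (rule sum.reindex_bij_witness[where i = "\<lambda>a. k - a" and j = "\<lambda>h. k - h"])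
  fix h assume h: "h \<in> {h\<in>{1..k}. coprime h k}"
  then show "k - (k - h) = h" by auto
  have "h \<noteq> k" using h assms by auto
  moreover have "coprime (k - h) k" using h gcd_diff2_nat[of h k] by (simp add: coprime_iff_gcd_eq_1)
  ultimately show "k - h \<in> {a\<in>{..<k}. coprime a k}" using h by auto
  show "f (k - (k - h)) = f h" using h by auto
next
  fix a assume a: "a \<in> {a\<in>{..<k}. coprime a k}"
  then show "k - (k - a) = a" by auto
  have "a \<noteq> 0"
  proof
    assume "a = 0"
    then have "coprime 0 k" using a by simp
    then show False using assms by simp
  qed
  moreover have "coprime (k - a) k" using a gcd_diff2_nat[of a k] by (simp add: coprime_iff_gcd_eq_1)
  ultimately show "k - a \<in> {h\<in>{1..k}. coprime h k}" using a by auto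
qed

lemma partB:
  assumes k: "k = 2 * s + 1" and N4: "4 dvd s * (s + 1)" and s0: "0 < s"
  shows "complex_of_int (Dv s k t) = 1 / of_nat k *
     (\<Sum>j\<in>{0..<k}. ramanujan k (t - int j ^ 2 - int (s * (s + 1) div 4)))"
proof -
  define N where "N = s * (s + 1) div 4"
  define A' where "A' = {a\<in>{..<k}. coprime a k}"
  have k1: "1 < k" using k s0 by simp
  have "of_nat k * complex_of_int (Dv s k t)
       = (\<Sum>a<k. E k (int a * (- t)) * (\<Prod>j\<in>{1..s}. 1 - E k (int a)^j))"
    by (rule fourier) (use k in simp)
  also have "\<dots> = (\<Sum>a\<in>A'. E k (int a * (- t)) * (\<Prod>j\<in>{1..s}. 1 - E k (int a)^j))"
  proof (rule sum.mono_neutral_right)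
    show "\<forall>i\<in>{..<k} - A'. E k (int i * (- t)) * (\<Prod>j\<in>{1..s}. 1 - E k (int i)^j) = 0"
    proof
      fix i assume "i \<in> {..<k} - A'"
      then have nc: "\<not> coprime i k" by (auto simp: A'_def)
      then show "E k (int i * (- t)) * (\<Prod>j\<in>{1..s}. 1 - E k (int i)^j) = 0"
        using vanish[OF k nc] by simp
    qed
  qed (auto simp: A'_def)
  also have "\<dots> = (\<Sum>a\<in>A'. \<Sum>x<k. E k (int a * (int N + int x ^ 2 - t)))"
  proof (rule sum.cong[OF refl])
    fix a assume "a \<in> A'"
    then have cop: "coprime a k" by (simp add: A'_def)
    have "(\<Prod>j\<in>{1..s}. 1 - E k (int a)^j) = E k (int a)^N * (\<Sum>x<2 * s + 1. E k (int a)^(x^2))"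
      unfolding N_def by (rule K) (use primE[OF k cop] N4 in auto)
    then show "E k (int a * (- t)) * (\<Prod>j\<in>{1..s}. 1 - E k (int a)^j) = (\<Sum>x<k. E k (int a * (int N + int x ^ 2 - t)))"
    proof -
      assume P: "(\<Prod>j\<in>{1..s}. 1 - E k (int a)^j) = E k (int a)^N * (\<Sum>x<2 * s + 1. E k (int a)^(x^2))"
      have "E k (int a * (int N + int x ^ 2 - t)) = E k (int a * (- t)) * (E k (int a)^N * E k (int a)^(x^2))" for x
      proof -
        have "int a * (int N + int x ^ 2 - t) = int a * (- t) + (int N * int a + int (x^2) * int a)"
          by (simp add: algebra_simps)
        then show ?thesis by (simp only: E_add E_nat_mult)
      qed
      then have ex: "E k (int a * (- t)) * (E k (int a)^N * E k (int a)^(x^2)) = E k (int a * (int N + int x ^ 2 - t))" for x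
        by simp
      have P': "(\<Prod>j\<in>{1..s}. 1 - E k (int a)^j) = E k (int a)^N * (\<Sum>x<k. E k (int a)^(x^2))"
        using P by (simp only: k)
      show ?thesis unfolding P' sum_distrib_left by (rule sum.cong[OF refl]) (simp only: mult.assoc ex)
    qed
  qed
  finally have LHS: "of_nat k * complex_of_int (Dv s k t) = (\<Sum>a\<in>A'. \<Sum>x<k. E k (int a * (int N + int x ^ 2 - t)))" .
  have "(\<Sum>j\<in>{0..<k}. ramanujan k (t - int j ^ 2 - int N))
      = (\<Sum>j<k. \<Sum>h\<in>{h\<in>{1..k}. coprime h k}. E k (int h * (t - int j ^ 2 - int N)))"
    by (simp add: rama_E atLeast0LessThan)
  also have "\<dots> = (\<Sum>h\<in>{h\<in>{1..k}. coprime h k}. \<Sum>j<k. E k (int h * (t - int j ^ 2 - int N)))"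
    by (rule sum.swap)
  also have "\<dots> = (\<Sum>a\<in>A'. \<Sum>j<k. E k (int (k - a) * (t - int j ^ 2 - int N)))"
    unfolding A'_def by (rule reidx[OF k1])
  also have "\<dots> = (\<Sum>a\<in>A'. \<Sum>j<k. E k (int a * (int N + int j ^ 2 - t)))"
  proof (intro sum.cong refl)
    fix a j assume "a \<in> A'"
    then have ak: "a \<le> k" by (simp add: A'_def)
    have "int (k - a) * (t - int j ^ 2 - int N) = int k * (t - int j ^ 2 - int N) + int a * (int N + int j ^ 2 - t)"
      using ak by (simp add: of_nat_diff algebra_simps)
    then show "E k (int (k - a) * (t - int j ^ 2 - int N)) = E k (int a * (int N + int j ^ 2 - t))"
      by (simp only: E_add E_period mult_1)
  qed
  finally have RHS: "(\<Sum>j\<in>{0..<k}. ramanujan k (t - int j ^ 2 - int N)) = of_nat k * complex_of_int (Dv s k t)"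
    using LHS by simp
  have kn: "of_nat k \<noteq> (0::complex)" using k1 by (simp only: of_nat_eq_0_iff)
  have "(\<Sum>j\<in>{0..<k}. ramanujan k (t - int j ^ 2 - int (s * (s + 1) div 4))) = of_nat k * complex_of_int (Dv s k t)"
    using RHS by (simp only: N_def)
  then show ?thesis using kn by simp
qed


section \<open>Perfect square case\<close>

lemma sum_split_add: "(\<Sum>x<n + m. f x) = (\<Sum>x<n. f x) + (\<Sum>y<m. f (n + y))"
  for f :: "nat \<Rightarrow> complex"
  by (induction m) (simp_all add: add.assoc)

lemma sum_split_mult: "(\<Sum>x<m * c. f x) = (\<Sum>z<c. \<Sum>y<m. f (m * z + y))"
  for f :: "nat \<Rightarrow> complex"
proof (induction c)
  case 0 then show ?case by simp
next
  case (Suc c)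
  have "m * Suc c = m * c + m" by simp
  then show ?case using Suc by (simp only: sum_split_add sum.lessThan_Suc)
qed

lemma SQ:
  assumes m0: "0 < m" and mo: "odd m" and cb: "coprime b (int (m * m))"
  shows "(\<Sum>x<m * m. E (m * m) (b * int x ^ 2)) = of_nat m"
proof -
  have cbm: "coprime (int m) (2 * b)"
    using cb mo by (simp add: coprime_commute)
  have "(\<Sum>x<m * m. E (m * m) (b * int x ^ 2)) = (\<Sum>z<m. \<Sum>y<m. E (m * m) (b * int (m * z + y) ^ 2))"
    by (rule sum_split_mult)
  also have "\<dots> = (\<Sum>y<m. \<Sum>z<m. E (m * m) (b * int (m * z + y) ^ 2))"
    by (rule sum.swap)
  also have "\<dots> = (\<Sum>y<m. E (m * m) (b * int y ^ 2) * (\<Sum>z<m. E m (int z * (2 * int y * b))))"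
  proof (rule sum.cong[OF refl])
    fix y
    have "E (m * m) (b * int (m * z + y) ^ 2) = E (m * m) (b * int y ^ 2) * E m (int z * (2 * int y * b))" for z
    proof -
      have "b * int (m * z + y) ^ 2 = b * int y ^ 2 + (int m * (int z * (2 * int y * b)) + int (m * m) * (b * int z ^ 2))"
        by (simp add: power2_eq_square algebra_simps)
      then show ?thesis by (simp only: E_add E_sq E_period mult_1_right)
    qed
    then show "(\<Sum>z<m. E (m * m) (b * int (m * z + y) ^ 2)) = E (m * m) (b * int y ^ 2) * (\<Sum>z<m. E m (int z * (2 * int y * b)))"
      by (simp add: sum_distrib_left)
  qed
  also have "\<dots> = (\<Sum>y<m. if y = 0 then of_nat m else 0)"
  proof (rule sum.cong[OF refl])
    fix y assume y: "y \<in> {..<m}"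
    have "int m dvd 2 * int y * b \<longleftrightarrow> int m dvd int y"
      using coprime_dvd_mult_left_iff[OF cbm, of "int y"] by (simp add: mult_ac)
    also have "\<dots> \<longleftrightarrow> y = 0" using y by (auto dest: dvd_imp_le)
    finally have dv: "int m dvd 2 * int y * b \<longleftrightarrow> y = 0" .
    show "E (m * m) (b * int y ^ 2) * (\<Sum>z<m. E m (int z * (2 * int y * b))) = (if y = 0 then of_nat m else 0)"
      using dv by (simp add: orth[OF m0] E_zero)
  qed
  also have "\<dots> = of_nat m" using m0 by simp
  finally show ?thesis .
qed

lemma partC:
  assumes k: "k = m * m" and m0: "0 < m" and mo: "odd m"
  shows "(\<Sum>j\<in>{0..<k}. ramanujan k (x - int j ^ 2)) = of_nat m * ramanujan k x"
proof -
  have "(\<Sum>j\<in>{0..<k}. ramanujan k (x - int j ^ 2))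
      = (\<Sum>j<k. \<Sum>h\<in>{h\<in>{1..k}. coprime h k}. E k (int h * (x - int j ^ 2)))"
    by (simp add: rama_E atLeast0LessThan)
  also have "\<dots> = (\<Sum>h\<in>{h\<in>{1..k}. coprime h k}. \<Sum>j<k. E k (int h * (x - int j ^ 2)))"
    by (rule sum.swap)
  also have "\<dots> = (\<Sum>h\<in>{h\<in>{1..k}. coprime h k}. E k (int h * x) * of_nat m)"
  proof (rule sum.cong[OF refl])
    fix h assume "h \<in> {h\<in>{1..k}. coprime h k}"
    then have ch: "coprime (- int h) (int (m * m))" using k by simp
    have "(\<Sum>j<k. E k (int h * (x - int j ^ 2))) = (\<Sum>j<k. E k (int h * x) * E k (- int h * int j ^ 2))"
    proof (rule sum.cong[OF refl])
      fix j
      have "int h * (x - int j ^ 2) = int h * x + - int h * int j ^ 2" by (simp add: algebra_simps)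
      then show "E k (int h * (x - int j ^ 2)) = E k (int h * x) * E k (- int h * int j ^ 2)"
        by (simp only: E_add)
    qed
    also have "\<dots> = E k (int h * x) * (\<Sum>j<k. E k (- int h * int j ^ 2))"
      by (simp add: sum_distrib_left)
    also have "(\<Sum>j<k. E k (- int h * int j ^ 2)) = of_nat m"
      unfolding k by (rule SQ[OF m0 mo ch])
    finally show "(\<Sum>j<k. E k (int h * (x - int j ^ 2))) = E k (int h * x) * of_nat m" .
  qed
  also have "\<dots> = of_nat m * ramanujan k x"
    by (simp add: rama_E sum_distrib_left mult.commute)
  finally show ?thesis .
qed


theorem theorem3p4:
  fixes s k :: nat and t :: int
  assumes "s > 0"
    and "4 dvd s \<or> 4 dvd (s + 1)"
    and "k = 2 * s + 1"
  shows "complex_of_int (int (card (SVT t 0 s k)) - int (card (SVT t 1 s k)))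
           = of_rat (sigma0 k t (s + 1))
       \<and> of_rat (sigma0 k t (s + 1))
           = (1 / of_nat k) * (\<Sum>j\<in>{0..<k}.
                ramanujan k (t - int j ^ 2 - int (s * (s + 1) div 4)))
       \<and> ((\<exists>m::nat. k = m ^ 2) \<longrightarrow>
           complex_of_int (int (card (SVT t 0 s k)) - int (card (SVT t 1 s k)))
             = of_rat (sigma0 k t (s + 1))
           \<and> of_rat (sigma0 k t (s + 1))
             = (1 / complex_of_real (sqrt (real k))) *
                 ramanujan k (t - int (s * (s + 1) div 4)))"
proof -
  define N where "N = s * (s + 1) div 4"
  have k0: "0 < k" using assms(3) by simp
  have N4: "4 dvd s * (s + 1)" using assms(2) by (meson dvd_mult dvd_mult2)
  have sD: "of_rat (sigma0 k t (s + 1)) = complex_of_int (Dv s k t)"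
    by (simp only: sigma_D[OF k0] of_rat_of_int_eq)
  have eqA: "complex_of_int (int (card (SVT t 0 s k)) - int (card (SVT t 1 s k))) = of_rat (sigma0 k t (s + 1))"
    by (simp only: partA sD)
  have eqB: "of_rat (sigma0 k t (s + 1)) = (1 / of_nat k) * (\<Sum>j\<in>{0..<k}.
                ramanujan k (t - int j ^ 2 - int (s * (s + 1) div 4)))"
    unfolding sD by (rule partB[OF assms(3) N4 assms(1)])
  have eqC: "(\<exists>m::nat. k = m ^ 2) \<longrightarrow> of_rat (sigma0 k t (s + 1))
             = (1 / complex_of_real (sqrt (real k))) * ramanujan k (t - int (s * (s + 1) div 4))"
  proof
    assume "\<exists>m::nat. k = m ^ 2"
    then obtain m :: nat where m: "k = m ^ 2" by blast
    have km: "k = m * m" using m by (simp add: power2_eq_square)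
    have m0: "0 < m" using k0 km by (cases m) auto
    have "odd k" using assms(3) by simp
    then have mo: "odd m" using km by simp
    have "(\<Sum>j\<in>{0..<k}. ramanujan k (t - int j ^ 2 - int N))
        = (\<Sum>j\<in>{0..<k}. ramanujan k ((t - int N) - int j ^ 2))"
      by (simp add: algebra_simps)
    also have "\<dots> = of_nat m * ramanujan k (t - int N)"
      by (rule partC[OF km m0 mo])
    finally have S: "(\<Sum>j\<in>{0..<k}. ramanujan k (t - int j ^ 2 - int N)) = of_nat m * ramanujan k (t - int N)" .
    have sq: "sqrt (real k) = real m" using m by simp
    have "of_rat (sigma0 k t (s + 1)) = (1 / of_nat k) * (of_nat m * ramanujan k (t - int N))"
      using eqB S by (simp add: N_def)
    also have "\<dots> = (1 / complex_of_real (sqrt (real k))) * ramanujan k (t - int N)"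
      unfolding sq using m0 by (simp add: km field_simps)
    finally show "of_rat (sigma0 k t (s + 1))
             = (1 / complex_of_real (sqrt (real k))) * ramanujan k (t - int (s * (s + 1) div 4))"
      by (simp add: N_def)
  qed
  show ?thesis using eqA eqB eqC by blast
qed

end
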